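(* For all positive integers $s,k$ and all nonnegative integers $t$, $$\binom{s+k-1}{s}\sum_{j=0}^{t}\binom{j+s-1}{s-1}\binom{j+k-1}{k-1}=\binom{t+s}{s}\sum_{j=0}^{k-1}\binom{j+s-1}{s-1}\binom{t+j}{j}.$$ *)

theory Defs
  imports Main
begin

end

theory Submission
  imports Defs
begin

lemma vand_ext:
  fixes j b n :: nat
  assumes "b \<le> n"
  shows "((j + b) choose b) = (\<Sum>i\<le>n. (j choose i) * (b choose i))"
proof -
  have "((j + b) choose b) = (\<Sum>i\<le>b. (j choose i) * (b choose (b - i)))"
    using vandermonde[of j b b] by simp
  also have "\<dots> = (\<Sum>i\<le>b. (j choose i) * (b choose i))"
    by (rule sum.cong) (auto simp: binomial_symmetric[symmetric])
  also have "\<dots> = (\<Sum>i\<le>n. (j choose i) * (b choose i))"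
    by (rule sum.mono_neutral_left) (use assms in auto)
  finally show ?thesis .
qed

lemma trin:
  fixes j a i :: nat
  shows "((j + a) choose a) * (j choose i) = ((a + i) choose i) * ((j + a) choose (a + i))"
proof (cases "i \<le> j")
  case True
  have "((j + a) choose (a + i)) * ((a + i) choose a) = ((j + a) choose a) * ((j + a - a) choose (a + i - a))"
    by (rule choose_mult) (use True in auto)
  then show ?thesis
    by (simp add: binomial_symmetric[of a "a+i"] mult.commute del: binomial_Suc_Suc)
next
  case False
  then show ?thesis by (simp add: binomial_eq_0 del: binomial_Suc_Suc)
qed

lemma hockey:
  fixes a i t :: nat
  shows "(\<Sum>j=0..t. ((j + a) choose (a + i))) = ((t + a + 1) choose (a + i + 1))"
proof (induction t)
  case 0
  then show ?case by (cases i) auto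
next
  case (Suc t)
  then show ?case by simp
qed

lemma expand:
  fixes a b t n :: nat
  assumes "b \<le> n"
  shows "(\<Sum>j=0..t. ((j + a) choose a) * ((j + b) choose b))
       = (\<Sum>i\<le>n. (b choose i) * ((a + i) choose i) * ((t + a + 1) choose (a + i + 1)))"
proof -
  have "(\<Sum>j=0..t. ((j + a) choose a) * ((j + b) choose b))
      = (\<Sum>j=0..t. \<Sum>i\<le>n. (b choose i) * (((j + a) choose a) * (j choose i)))"
    by (simp add: vand_ext[OF assms] sum_distrib_left mult.commute mult.left_commute del: binomial_Suc_Suc)
  also have "\<dots> = (\<Sum>j=0..t. \<Sum>i\<le>n. (b choose i) * ((a + i) choose i) * ((j + a) choose (a + i)))"
    by (simp add: trin mult.assoc del: binomial_Suc_Suc)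
  also have "\<dots> = (\<Sum>i\<le>n. \<Sum>j=0..t. (b choose i) * ((a + i) choose i) * ((j + a) choose (a + i)))"
    by (rule sum.swap)
  also have "\<dots> = (\<Sum>i\<le>n. (b choose i) * ((a + i) choose i) * ((t + a + 1) choose (a + i + 1)))"
    by (simp add: sum_distrib_left[symmetric] hockey del: binomial_Suc_Suc)
  finally show ?thesis .
qed

lemma sym_term:
  fixes a b i :: nat
  shows "((a + b + 1) choose (a + 1)) * (b choose i) = ((a + b + 1) choose (a + i + 1)) * ((a + i + 1) choose (a + 1))"
proof (cases "i \<le> b")
  case True
  have "((a + b + 1) choose (a + i + 1)) * ((a + i + 1) choose (a + 1)) = ((a + b + 1) choose (a + 1)) * ((a + b + 1 - (a + 1)) choose (a + i + 1 - (a + 1)))"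
    by (rule choose_mult) (use True in auto)
  then show ?thesis by (simp del: binomial_Suc_Suc)
next
  case False
  then have "b choose i = 0" "(a + b + 1) choose (a + i + 1) = 0" by (simp_all add: binomial_eq_0 del: binomial_Suc_Suc)
  then show ?thesis by (metis mult_0 mult_0_right)
qed

lemma key:
  fixes a b t :: nat
  shows "((a + b + 1) choose (a + 1)) * (\<Sum>j=0..t. ((j + a) choose a) * ((j + b) choose b))
       = ((t + a + 1) choose (a + 1)) * (\<Sum>j=0..b. ((j + a) choose a) * ((j + t) choose t))"
proof -
  have "((a + b + 1) choose (a + 1)) * (\<Sum>j=0..t. ((j + a) choose a) * ((j + b) choose b))
     = (\<Sum>i\<le>b+t. ((a + i) choose i) * ((((a + b + 1) choose (a + 1)) * (b choose i)) * ((t + a + 1) choose (a + i + 1))))"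
    by (simp add: expand[of b "b+t"] sum_distrib_left mult.commute mult.left_commute del: binomial_Suc_Suc)
  also have "\<dots> = (\<Sum>i\<le>b+t. ((a + i) choose i) * ((((a + t + 1) choose (a + 1)) * (t choose i)) * ((b + a + 1) choose (a + i + 1))))"
  proof (rule sum.cong[OF refl])
    fix i assume "i \<in> {..b+t}"
    have "(((a + b + 1) choose (a + 1)) * (b choose i)) * ((t + a + 1) choose (a + i + 1))
        = ((a + b + 1) choose (a + i + 1)) * ((a + i + 1) choose (a + 1)) * ((t + a + 1) choose (a + i + 1))"
      by (simp only: sym_term)
    also have "\<dots> = (((a + t + 1) choose (a + 1)) * (t choose i)) * ((b + a + 1) choose (a + i + 1))"
    proof -
      have h: "((a + t + 1) choose (a + 1)) * (t choose i) = ((a + t + 1) choose (a + i + 1)) * ((a + i + 1) choose (a + 1))"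
        by (rule sym_term)
      have e: "t + a + 1 = a + t + 1" "b + a + 1 = a + b + 1" by simp_all
      show ?thesis unfolding e h by (simp only: ac_simps)
    qed
    finally show "((a + i) choose i) * ((((a + b + 1) choose (a + 1)) * (b choose i)) * ((t + a + 1) choose (a + i + 1)))
      = ((a + i) choose i) * ((((a + t + 1) choose (a + 1)) * (t choose i)) * ((b + a + 1) choose (a + i + 1)))"
      by simp
  qed
  also have "\<dots> = ((t + a + 1) choose (a + 1)) * (\<Sum>j=0..b. ((j + a) choose a) * ((j + t) choose t))"
    by (simp add: expand[of t "b+t"] sum_distrib_left mult.commute mult.left_commute add.commute add.left_commute del: binomial_Suc_Suc)
  finally show ?thesis .
qed

theorem mainTheorem10:
  fixes s k t :: nat
  assumes "s \<ge> 1" and "k \<ge> 1"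
  shows "((s + k - 1) choose s) * (\<Sum>j=0..t. ((j + s - 1) choose (s - 1)) * ((j + k - 1) choose (k - 1)))
       = ((t + s) choose s) * (\<Sum>j=0..k-1. ((j + s - 1) choose (s - 1)) * ((t + j) choose j))"
proof -
  obtain a where a: "s = Suc a" using assms(1) by (cases s) auto
  obtain b where b: "k = Suc b" using assms(2) by (cases k) auto
  have c: "\<And>j. ((t + j) choose j) = ((j + t) choose t)"
    by (metis add.commute binomial_symmetric le_add2 add_diff_cancel_left')
  show ?thesis
  proof -
    have e1: "s + k - 1 = a + b + 1" "s - 1 = a" "k - 1 = b" "t + s = t + a + 1"
      "\<And>j. j + s - 1 = j + a" "\<And>j. j + k - 1 = j + b" using a b by simp_all
    have e2: "(\<Sum>j=0..b. ((j + a) choose a) * ((t + j) choose j)) = (\<Sum>j=0..b. ((j + a) choose a) * ((j + t) choose t))"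
      by (rule sum.cong[OF refl]) (simp only: c)
    have e3: "s = a + 1" using a by simp
    show ?thesis unfolding e1 e2 unfolding e3
      using key[of a b t] by (simp only: add.assoc add.commute[of 1 b])
  qed
qed

end
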